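(* Let $n\ge 2$. For $\alpha=(a_1,\dots,a_{n-1})\in PF_{n-1}$ define $\Psi(\alpha)=(n+1-a_1,\,n+1-a_2,\,\dots,\,n+1-a_{n-1},\,n)$. Then $\Psi$ is a bijection from $PF_{n-1}$ onto $PF_{n,n-1}\setminus PF_{n,n-2}$.
   Context: For $n\in\mathbb{N}$ let $[n]=\{1,\dots,n\}$ and $PP_n=[n]^n$. For an integer $k\ge 0$, the $k$-Naples parking rule: there are $n$ spots numbered $1,\dots,n$ west to east, initially empty; cars $c_1,\dots,c_n$ arrive in order, car $c_i$ preferring spot $a_i$. If spot $a_i$ is empty, $c_i$ parks there. Otherwise $c_i$ checks spots $a_i-1,\dots,a_i-k$ in this order (skipping those $<1$) and parks in the first empty one; if all are occupied, it drives east and parks in the first empty spot numbered greater than $a_i$, failing to park if none exists. $PF_{n,k}$ is the set of preferences in $PP_n$ for which all cars park. $PF_{m}=PF_{m,0}$ is the set of classical parking functions of length $m$. *)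

theory Defs
  imports Main
begin

definition PP :: "nat \<Rightarrow> nat list set" where
  "PP n = {xs. length xs = n \<and> set xs \<subseteq> {1..n}}"

(* Spot chosen by a car preferring spot a under the k-Naples rule, given the set
   occ of occupied spots, with n spots in total.  None = the car fails to park. *)
definition naples_spot :: "nat \<Rightarrow> nat \<Rightarrow> nat set \<Rightarrow> nat \<Rightarrow> nat option" where
  "naples_spot n k occ a =
     (if a \<notin> occ then Some a
      else if (\<exists>j\<in>{1..k}. 1 \<le> a - j \<and> j < a \<and> a - j \<notin> occ)
        then Some (a - (LEAST j. j \<in> {1..k} \<and> j < a \<and> a - j \<notin> occ))
      else if (\<exists>s. a < s \<and> s \<le> n \<and> s \<notin> occ)
        then Some (LEAST s. a < s \<and> s \<le> n \<and> s \<notin> occ)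
      else None)"

fun naples_run :: "nat \<Rightarrow> nat \<Rightarrow> nat set \<Rightarrow> nat list \<Rightarrow> nat set option" where
  "naples_run n k occ [] = Some occ"
| "naples_run n k occ (a # as) =
     (case naples_spot n k occ a of
        None \<Rightarrow> None
      | Some s \<Rightarrow> naples_run n k (insert s occ) as)"

definition PF_k :: "nat \<Rightarrow> nat \<Rightarrow> nat list set" where
  "PF_k n k = {xs \<in> PP n. naples_run n k {} xs \<noteq> None}"

definition PF :: "nat \<Rightarrow> nat list set" where
  "PF m = PF_k m 0"

definition Psi :: "nat \<Rightarrow> nat list \<Rightarrow> nat list" where
  "Psi n \<alpha> = map (\<lambda>a. n + 1 - a) \<alpha> @ [n]"

end

theory Submission imports Defs begin

lemma run_append: "naples_run n k occ (xs @ ys) = (case naples_run n k occ xs of None \<Rightarrow> None | Some oc \<Rightarrow> naples_run n k oc ys)"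
  by (induction xs arbitrary: occ) (auto split: option.split)

lemma spot_notin: "naples_spot n k occ a = Some s \<Longrightarrow> s \<notin> occ"
  unfolding naples_spot_def
  apply (auto split: if_splits)
   apply (smt (verit) LeastI_ex)
  apply (smt (verit) LeastI_ex)
  done

lemma spot_range:
  assumes a: "a \<in> {1..n}" and sp: "naples_spot n k occ a = Some s" shows "s \<in> {1..n}"
proof -
  consider (c1) "a \<notin> occ" "s = a"
    | (c2) "\<exists>j. j \<in> {1..k} \<and> j < a \<and> a - j \<notin> occ" "s = a - (LEAST j. j \<in> {1..k} \<and> j < a \<and> a - j \<notin> occ)"
    | (c3) "\<exists>s. a < s \<and> s \<le> n \<and> s \<notin> occ" "s = (LEAST s. a < s \<and> s \<le> n \<and> s \<notin> occ)"
  proof -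
    show ?thesis if "a \<notin> occ \<Longrightarrow> s = a \<Longrightarrow> thesis"
      "(\<exists>j. j \<in> {1..k} \<and> j < a \<and> a - j \<notin> occ) \<Longrightarrow> s = a - (LEAST j. j \<in> {1..k} \<and> j < a \<and> a - j \<notin> occ) \<Longrightarrow> thesis"
      "(\<exists>s. a < s \<and> s \<le> n \<and> s \<notin> occ) \<Longrightarrow> s = (LEAST s. a < s \<and> s \<le> n \<and> s \<notin> occ) \<Longrightarrow> thesis"
    proof (cases "a \<in> occ")
      case False then show ?thesis using that(1) sp unfolding naples_spot_def by simp
    next
      case True
      show ?thesis
      proof (cases "\<exists>j\<in>{1..k}. 1 \<le> a - j \<and> j < a \<and> a - j \<notin> occ")
        case True2: True
        have e: "\<exists>j. j \<in> {1..k} \<and> j < a \<and> a - j \<notin> occ" using True2 by auto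
        have "s = a - (LEAST j. j \<in> {1..k} \<and> j < a \<and> a - j \<notin> occ)"
          using sp True True2 unfolding naples_spot_def by auto
        then show ?thesis by (rule that(2)[OF e])
      next
        case False2: False
        then have "\<not> (\<exists>j. j \<in> {1..k} \<and> j < a \<and> a - j \<notin> occ)" by auto
        then show ?thesis using that(3) sp True False2 unfolding naples_spot_def
          by (auto split: if_splits)
      qed
    qed
  qed
  then show ?thesis
  proof cases
    case c1 then show ?thesis using a by simp
  next
    case c2
    have "(LEAST j. j \<in> {1..k} \<and> j < a \<and> a - j \<notin> occ) < a"
      using LeastI_ex[OF c2(1)] by blast
    then show ?thesis using c2(2) a by auto
  next
    case c3
    have "a < s \<and> s \<le> n" using LeastI_ex[OF c3(1)] c3(2) by blast
    then show ?thesis using a by auto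
  qed
qed

lemma run_mono: "naples_run n k occ xs = Some oc \<Longrightarrow> occ \<subseteq> oc"
  by (induction xs arbitrary: occ) (auto split: option.splits)

lemma run_props: "naples_run n k occ xs = Some oc \<Longrightarrow> finite occ \<Longrightarrow> occ \<subseteq> {1..n} \<Longrightarrow> set xs \<subseteq> {1..n}
   \<Longrightarrow> oc \<subseteq> {1..n} \<and> card oc = card occ + length xs"
proof (induction xs arbitrary: occ)
  case Nil
  then show ?case by simp
next
  case (Cons a xs)
  then obtain s where s: "naples_spot n k occ a = Some s" and r: "naples_run n k (insert s occ) xs = Some oc"
    by (auto split: option.splits)
  have "s \<notin> occ" using spot_notin[OF s] .
  moreover have "s \<in> {1..n}" using spot_range[OF _ s] Cons.prems by auto
  ultimately show ?case using Cons.IH[OF r] Cons.prems by auto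
qed

lemma spot_back:
  assumes "a \<in> occ" "s \<notin> occ" "1 \<le> s" "s < a" "a - s \<le> k" "\<forall>t. s < t \<and> t < a \<longrightarrow> t \<in> occ"
  shows "naples_spot n k occ a = Some s"
proof -
  have ex: "\<exists>j\<in>{1..k}. 1 \<le> a - j \<and> j < a \<and> a - j \<notin> occ"
    using assms by (intro bexI[of _ "a - s"]) auto
  have "(LEAST j. j \<in> {1..k} \<and> j < a \<and> a - j \<notin> occ) = a - s"
  proof (rule Least_equality)
    show "a - s \<in> {1..k} \<and> a - s < a \<and> a - (a - s) \<notin> occ" using assms by auto
  next
    fix y assume y: "y \<in> {1..k} \<and> y < a \<and> a - y \<notin> occ"
    show "a - s \<le> y"
    proof (rule ccontr)
      assume "\<not> a - s \<le> y"
      then have "s < a - y" "a - y < a" using y by auto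
      then show False using assms(6) y by auto
    qed
  qed
  then show ?thesis using ex assms unfolding naples_spot_def by auto
qed


lemma pref_in: "naples_run n k occ xs = Some oc \<Longrightarrow> a \<in> set xs \<Longrightarrow> a \<in> oc"
proof (induction xs arbitrary: occ)
  case Nil then show ?case by simp
next
  case (Cons b xs)
  then obtain s where s: "naples_spot n k occ b = Some s" and r: "naples_run n k (insert s occ) xs = Some oc"
    by (auto split: option.splits)
  show ?case
  proof (cases "a = b")
    case True
    have "a \<in> insert s occ"
    proof (cases "b \<in> occ")
      case False then show ?thesis using s True by (simp add: naples_spot_def)
    qed (use True in auto)
    then show ?thesis using run_mono[OF r] by auto
  next
    case False then show ?thesis using Cons r by auto
  qed
qed

lemma refl_inj: "x \<le> n \<Longrightarrow> y \<le> n \<Longrightarrow> n + 1 - x = n + 1 - (y::nat) \<Longrightarrow> x = y" by arith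

lemma B1_some:
  assumes n: "n \<ge> 2" and occ: "occ \<subseteq> {1..n-1}" and a: "a \<in> {1..n-1}" and k: "n - 2 \<le> k"
    and sp: "naples_spot (n-1) 0 occ a = Some s"
  shows "naples_spot n k ((\<lambda>x. n+1-x) ` occ) (n+1-a) = Some (n+1-s)"
proof (cases "a \<in> occ")
  case False
  then have "s = a" using sp by (simp add: naples_spot_def)
  have "n+1-a \<notin> (\<lambda>x. n+1-x) ` occ"
  proof
    assume "n+1-a \<in> (\<lambda>x. n+1-x) ` occ"
    then obtain b where "b \<in> occ" "n+1-a = n+1-b" by auto
    then have "a = b" using occ a refl_inj[of a n b] by auto
    then show False using False \<open>b \<in> occ\<close> by simp
  qed
  then show ?thesis by (simp add: naples_spot_def \<open>s = a\<close>)
next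
  case True
  have ex: "\<exists>t. a < t \<and> t \<le> n-1 \<and> t \<notin> occ"
    using sp True by (auto simp: naples_spot_def split: if_splits)
  have sdef: "s = (LEAST t. a < t \<and> t \<le> n-1 \<and> t \<notin> occ)" using sp True ex by (simp add: naples_spot_def)
  have s1: "a < s \<and> s \<le> n-1 \<and> s \<notin> occ" using LeastI_ex[OF ex] sdef by simp
  have s2: "t \<in> occ" if "a < t" "t < s" for t
  proof -
    have "\<not> (a < t \<and> t \<le> n-1 \<and> t \<notin> occ)" using not_less_Least[of t "\<lambda>t. a < t \<and> t \<le> n-1 \<and> t \<notin> occ"] sdef that by auto
    then show ?thesis using that s1 by auto
  qed
  show ?thesis
  proof (rule spot_back)
    show "n + 1 - a \<in> (\<lambda>x. n + 1 - x) ` occ" using True by auto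
    show "n + 1 - s \<notin> (\<lambda>x. n + 1 - x) ` occ"
    proof
      assume "n+1-s \<in> (\<lambda>x. n+1-x) ` occ"
      then obtain b where "b \<in> occ" "n+1-s = n+1-b" by auto
      then have "s = b" using occ s1 refl_inj[of s n b] by auto
      then show False using s1 \<open>b \<in> occ\<close> by simp
    qed
    show "1 \<le> n + 1 - s" using s1 by auto
    show "n + 1 - s < n + 1 - a" using s1 by auto
    show "n + 1 - a - (n + 1 - s) \<le> k" using s1 a k by auto
    show "\<forall>t. n + 1 - s < t \<and> t < n + 1 - a \<longrightarrow> t \<in> (\<lambda>x. n + 1 - x) ` occ"
    proof (intro allI impI)
      fix t assume t: "n + 1 - s < t \<and> t < n + 1 - a"
      then have "n+1-t \<in> occ" using s2[of "n+1-t"] s1 by auto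
      moreover have "t = n+1-(n+1-t)" using t by auto
      ultimately show "t \<in> (\<lambda>x. n + 1 - x) ` occ" by blast
    qed
  qed
qed

lemma B1_none:
  assumes n: "n \<ge> 2" and occ: "occ \<subseteq> {1..n-1}" and a: "a \<in> {1..n-1}"
    and sp: "naples_spot (n-1) 0 occ a = None"
  shows "naples_spot n (n-1) ((\<lambda>x. n+1-x) ` occ) (n+1-a) = Some 1"
proof -
  have True: "a \<in> occ" using sp by (auto simp: naples_spot_def split: if_splits)
  have nex: "\<forall>t. a < t \<and> t \<le> n-1 \<longrightarrow> t \<in> occ"
    using sp True by (auto simp: naples_spot_def split: if_splits)
  show ?thesis
  proof (rule spot_back)
    show "n + 1 - a \<in> (\<lambda>x. n + 1 - x) ` occ" using True by auto
    show "1 \<notin> (\<lambda>x. n + 1 - x) ` occ"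
    proof
      assume "1 \<in> (\<lambda>x. n + 1 - x) ` occ"
      then obtain b where "b \<in> occ" "1 = n+1-b" by auto
      then show False using occ by fastforce
    qed
    show "(1::nat) \<le> 1" by simp
    show "1 < n + 1 - a" using a by auto
    show "n + 1 - a - 1 \<le> n - 1" using a by auto
    show "\<forall>t. 1 < t \<and> t < n + 1 - a \<longrightarrow> t \<in> (\<lambda>x. n + 1 - x) ` occ"
    proof (intro allI impI)
      fix t assume t: "1 < t \<and> t < n + 1 - a"
      then have "a < n+1-t \<and> n+1-t \<le> n-1" using a by auto
      then have "n+1-t \<in> occ" using nex by blast
      moreover have "t = n+1-(n+1-t)" using t by auto
      ultimately show "t \<in> (\<lambda>x. n + 1 - x) ` occ" by blast
    qed
  qed
qed

lemma B_some: "n \<ge> 2 \<Longrightarrow> n - 2 \<le> k \<Longrightarrow> occ \<subseteq> {1..n-1} \<Longrightarrow> set xs \<subseteq> {1..n-1} \<Longrightarrow>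
  naples_run (n-1) 0 occ xs = Some oc \<Longrightarrow> naples_run n k ((\<lambda>x. n+1-x) ` occ) (map (\<lambda>x. n+1-x) xs) = Some ((\<lambda>x. n+1-x) ` oc)"
proof (induction xs arbitrary: occ)
  case Nil then show ?case by simp
next
  case (Cons a xs)
  then obtain s where s: "naples_spot (n-1) 0 occ a = Some s" and r: "naples_run (n-1) 0 (insert s occ) xs = Some oc"
    by (auto split: option.splits)
  have "s \<in> {1..n-1}" using spot_range[OF _ s] Cons.prems by auto
  then have "naples_run n k ((\<lambda>x. n+1-x) ` insert s occ) (map (\<lambda>x. n+1-x) xs) = Some ((\<lambda>x. n+1-x) ` oc)"
    using Cons.IH[of "insert s occ"] Cons.prems r by auto
  moreover have "naples_spot n k ((\<lambda>x. n+1-x) ` occ) (n+1-a) = Some (n+1-s)"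
    using B1_some[OF _ _ _ _ s] Cons.prems by auto
  ultimately show ?case by simp
qed

lemma B_none: "n \<ge> 2 \<Longrightarrow> occ \<subseteq> {1..n-1} \<Longrightarrow> set xs \<subseteq> {1..n-1} \<Longrightarrow>
  naples_run (n-1) 0 occ xs = None \<Longrightarrow> naples_run n (n-1) ((\<lambda>x. n+1-x) ` occ) (map (\<lambda>x. n+1-x) xs) = Some oc \<Longrightarrow> 1 \<in> oc"
proof (induction xs arbitrary: occ)
  case Nil then show ?case by simp
next
  case (Cons a xs)
  show ?case
  proof (cases "naples_spot (n-1) 0 occ a")
    case None
    have "naples_spot n (n-1) ((\<lambda>x. n+1-x) ` occ) (n+1-a) = Some 1"
      using B1_none[OF _ _ _ None] Cons.prems by auto
    then have "naples_run n (n-1) (insert 1 ((\<lambda>x. n+1-x) ` occ)) (map (\<lambda>x. n+1-x) xs) = Some oc"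
      using Cons.prems by simp
    then show ?thesis using run_mono by blast
  next
    case (Some s)
    have "s \<in> {1..n-1}" using spot_range[OF _ Some] Cons.prems by auto
    have "naples_spot n (n-1) ((\<lambda>x. n+1-x) ` occ) (n+1-a) = Some (n+1-s)"
      using B1_some[OF _ _ _ _ Some] Cons.prems by auto
    then have "naples_run n (n-1) ((\<lambda>x. n+1-x) ` insert s occ) (map (\<lambda>x. n+1-x) xs) = Some oc"
      using Cons.prems by simp
    then show ?thesis using Cons.IH[of "insert s occ"] Cons.prems Some \<open>s \<in> {1..n-1}\<close> by auto
  qed
qed


lemma no_back: "\<not> (\<exists>s. 1 \<le> s \<and> s < (a::nat) \<and> s \<notin> occ) \<Longrightarrow> \<not> (\<exists>j\<in>{1..k}. 1 \<le> a - j \<and> j < a \<and> a - j \<notin> occ)"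
proof (rule notI, elim bexE conjE)
  fix j assume h: "\<not> (\<exists>s. 1 \<le> s \<and> s < a \<and> s \<notin> occ)" "j \<in> {1..k}" "1 \<le> a - j" "j < a" "a - j \<notin> occ"
  have "0 < j" "0 < a" using h by auto
  then have "a - j < a" by (rule diff_less)
  then show False using h by blast
qed

lemma spot_fwd_only:
  assumes "a \<in> occ" "\<not> (\<exists>s. 1 \<le> s \<and> s < a \<and> s \<notin> occ)"
  shows "naples_spot n k occ a = (if \<exists>s. a < s \<and> s \<le> n \<and> s \<notin> occ then Some (LEAST s. a < s \<and> s \<le> n \<and> s \<notin> occ) else None)"
proof -
  have c1: "(a \<notin> occ) = False" using assms by simp
  have c2: "(\<exists>j\<in>{1..k}. 1 \<le> a - j \<and> j < a \<and> a - j \<notin> occ) = False" using no_back[OF assms(2)] by simp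
  show ?thesis unfolding naples_spot_def c1 c2 if_False ..
qed

lemma spot_diff:
  assumes n: "n \<ge> 2" and a: "a \<in> {1..n}" and nb: "\<not> (a = n \<and> {2..n} \<subseteq> occ \<and> 1 \<notin> occ)"
  shows "naples_spot n (n-2) occ a = naples_spot n (n-1) occ a"
proof (cases "a \<in> occ")
  case False then show ?thesis by (simp add: naples_spot_def)
next
  case True
  show ?thesis
  proof (cases "\<exists>s. 1 \<le> s \<and> s < a \<and> s \<notin> occ")
    case ex: True
    define S where "S = {s. 1 \<le> s \<and> s < a \<and> s \<notin> occ}"
    have fin: "finite S" unfolding S_def by (rule finite_subset[of _ "{..<a}"]) auto
    have ne: "S \<noteq> {}" using ex unfolding S_def by auto
    define m where "m = Max S"
    have mS: "m \<in> S" using Max_in[OF fin ne] m_def by simp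
    have mmax: "t \<le> m" if "t \<in> S" for t using Max_ge[OF fin that] m_def by simp
    have gap: "\<forall>t. m < t \<and> t < a \<longrightarrow> t \<in> occ"
    proof (intro allI impI)
      fix t assume t: "m < t \<and> t < a"
      show "t \<in> occ"
      proof (rule ccontr)
        assume "t \<notin> occ"
        then have "t \<in> S" using t mS unfolding S_def by auto
        then show False using mmax t by fastforce
      qed
    qed
    show ?thesis
    proof (cases "a - m \<le> n - 2")
      case True
      have "naples_spot n (n-2) occ a = Some m"
        by (rule spot_back) (use \<open>a \<in> occ\<close> mS True gap in \<open>auto simp: S_def\<close>)
      moreover have "naples_spot n (n-1) occ a = Some m"
        by (rule spot_back) (use \<open>a \<in> occ\<close> mS True gap in \<open>auto simp: S_def\<close>)
      ultimately show ?thesis by simp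
    next
      case False
      then have m1: "m = 1" "a = n" using mS a unfolding S_def by auto
      have "{2..n} \<subseteq> occ"
      proof
        fix t assume "t \<in> {2..n}"
        then show "t \<in> occ" using gap m1 \<open>a \<in> occ\<close> by (cases "t = n") auto
      qed
      moreover have "1 \<notin> occ" using mS m1 unfolding S_def by auto
      ultimately show ?thesis using nb m1 by auto
    qed
  next
    case False
    then show ?thesis using spot_fwd_only[OF True False] by simp
  qed
qed

lemma D: "n \<ge> 2 \<Longrightarrow> occ \<subseteq> {1..n} \<Longrightarrow> set xs \<subseteq> {1..n} \<Longrightarrow> naples_run n (n-2) occ xs = None \<Longrightarrow>
   naples_run n (n-1) occ xs \<noteq> None \<Longrightarrow>
   \<exists>us vs occ1. xs = us @ n # vs \<and> naples_run n (n-1) occ us = Some occ1 \<and> {2..n} \<subseteq> occ1 \<and> 1 \<notin> occ1"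
proof (induction xs arbitrary: occ)
  case Nil then show ?case by simp
next
  case (Cons a xs)
  then obtain s where s: "naples_spot n (n-1) occ a = Some s" and r: "naples_run n (n-1) (insert s occ) xs \<noteq> None"
    by (auto split: option.splits)
  show ?case
  proof (cases "a = n \<and> {2..n} \<subseteq> occ \<and> 1 \<notin> occ")
    case True
    then show ?thesis by (intro exI[of _ "[]"] exI[of _ xs] exI[of _ occ]) auto
  next
    case False
    have eq: "naples_spot n (n-2) occ a = Some s" using spot_diff[OF _ _ False] s Cons.prems by auto
    have sr: "s \<in> {1..n}" using spot_range[OF _ s] Cons.prems by auto
    have "naples_run n (n-2) (insert s occ) xs = None" using Cons.prems eq by simp
    then obtain us vs occ1 where "xs = us @ n # vs" "naples_run n (n-1) (insert s occ) us = Some occ1"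
       "{2..n} \<subseteq> occ1" "1 \<notin> occ1"
      using Cons.IH[of "insert s occ"] Cons.prems r sr by auto
    then show ?thesis using s by (intro exI[of _ "a # us"] exI[of _ vs] exI[of _ occ1]) auto
  qed
qed

lemma img_refl: "(n::nat) \<ge> 2 \<Longrightarrow> (\<lambda>x. n+1-x) ` {1..n-1} = {2..n}"
proof
  show "(\<lambda>x. n+1-x) ` {1..n-1} \<subseteq> {2..n}" by auto
  show "{2..n} \<subseteq> (\<lambda>x. n+1-x) ` {1..n-1}"
  proof
    fix t assume t: "t \<in> {2..n}"
    then have "t = n+1-(n+1-t)" "n+1-t \<in> {1..n-1}" by auto
    then show "t \<in> (\<lambda>x. n+1-x) ` {1..n-1}" by blast
  qed
qed

lemma last_ok: "n \<ge> 2 \<Longrightarrow> naples_spot n (n-1) {2..n} n = Some 1"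
  by (rule spot_back) auto

lemma last_bad: "n \<ge> 2 \<Longrightarrow> naples_spot n (n-2) {2..n} n = None"
  by (auto simp: naples_spot_def)

theorem theorem2p3:
  fixes n :: nat
  assumes "n \<ge> 2"
  shows "bij_betw (Psi n) (PF (n - 1)) (PF_k n (n - 1) - PF_k n (n - 2))"
proof -
  let ?f = "\<lambda>x. n+1-x"
  have PFdef: "x \<in> PF (n-1) \<longleftrightarrow> length x = n-1 \<and> set x \<subseteq> {1..n-1} \<and> naples_run (n-1) 0 {} x \<noteq> None" for x
    by (simp add: PF_def PF_k_def PP_def)
  have injf: "inj_on ?f {1..n}" by (auto simp: inj_on_def)
  have inj: "inj_on (Psi n) (PF (n - 1))"
  proof (rule inj_onI)
    fix x y assume x: "x \<in> PF (n-1)" and y: "y \<in> PF (n-1)" and e: "Psi n x = Psi n y"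
    then have "map ?f x = map ?f y" by (simp add: Psi_def)
    moreover have "set x \<union> set y \<subseteq> {1..n}"
      using x y PFdef[of x] PFdef[of y] by fastforce
    then have "inj_on ?f (set x \<union> set y)"
      by (intro inj_on_subset[OF injf])
    ultimately show "x = y" using inj_on_map_eq_map by blast
  qed
  have fwd: "Psi n x \<in> PF_k n (n - 1) - PF_k n (n - 2)" if x: "x \<in> PF (n-1)" for x
  proof -
    from x have lx: "length x = n-1" and sx: "set x \<subseteq> {1..n-1}" and rx: "naples_run (n-1) 0 {} x \<noteq> None"
      using PFdef by auto
    then obtain oc where oc: "naples_run (n-1) 0 {} x = Some oc" by auto
    have "oc \<subseteq> {1..n-1} \<and> card oc = length x" using run_props[OF oc] sx by auto
    then have "oc = {1..n-1}" using lx by (metis card_atLeastAtMost card_subset_eq diff_Suc_1 finite_atLeastAtMost)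
    then have im: "?f ` oc = {2..n}" using img_refl assms by simp
    have r1: "naples_run n (n-1) {} (map ?f x) = Some {2..n}"
      using B_some[of n "n-1" "{}" x oc] assms sx oc im by auto
    have r2: "naples_run n (n-2) {} (map ?f x) = Some {2..n}"
      using B_some[of n "n-2" "{}" x oc] assms sx oc im by auto
    have "?f b \<in> {1..n}" if "b \<in> set x" for b
    proof -
      have "b \<in> {1..n-1}" using sx that by blast
      then show ?thesis by auto
    qed
    then have pp: "Psi n x \<in> PP n" using lx assms by (auto simp: Psi_def PP_def)
    have "naples_run n (n-1) {} (Psi n x) \<noteq> None"
      unfolding Psi_def run_append using r1 last_ok[OF assms] by simp
    moreover have "naples_run n (n-2) {} (Psi n x) = None"
      unfolding Psi_def run_append using r2 last_bad[OF assms] by simp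
    ultimately show ?thesis using pp by (simp add: PF_k_def)
  qed
  have bwd: "y \<in> Psi n ` PF (n-1)" if y: "y \<in> PF_k n (n - 1) - PF_k n (n - 2)" for y
  proof -
    from y have ly: "length y = n" and sy: "set y \<subseteq> {1..n}" and r1: "naples_run n (n-1) {} y \<noteq> None"
      and r2: "naples_run n (n-2) {} y = None"
      by (auto simp: PF_k_def PP_def)
    obtain us vs occ1 where yd: "y = us @ n # vs" and ru: "naples_run n (n-1) {} us = Some occ1"
      and o2: "{2..n} \<subseteq> occ1" and o1: "1 \<notin> occ1"
      using D[OF assms _ sy r2 r1] by auto
    have su: "set us \<subseteq> {1..n}" using sy yd by auto
    have "occ1 \<subseteq> {1..n} \<and> card occ1 = length us" using run_props[OF ru] su by auto
    then have "occ1 = {2..n}" "card occ1 = length us"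
    proof -
      assume h: "occ1 \<subseteq> {1..n} \<and> card occ1 = length us"
      have "occ1 \<subseteq> {2..n}"
      proof
        fix t assume "t \<in> occ1"
        then have "t \<in> {1..n}" "t \<noteq> 1" using h o1 by auto
        then show "t \<in> {2..n}" by auto
      qed
      then show "occ1 = {2..n}" using o2 by auto
      show "card occ1 = length us" using h by simp
    qed
    then have "length us = n - 1" by simp
    then have "vs = []" using ly yd assms by simp
    have su2: "set us \<subseteq> {2..n}"
    proof
      fix b assume "b \<in> set us"
      then have "b \<in> occ1" "b \<in> {1..n}" using pref_in[OF ru] su by auto
      then show "b \<in> {2..n}" using o1 by (cases "b = 1") auto
    qed
    define x where "x = map ?f us"
    have sx: "set x \<subseteq> {1..n-1}"
    proof
      fix c assume "c \<in> set x"
      then obtain b where "b \<in> set us" "c = ?f b" unfolding x_def by auto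
      moreover have "b \<in> {2..n}" using su2 \<open>b \<in> set us\<close> by blast
      ultimately show "c \<in> {1..n-1}" by auto
    qed
    have lx: "length x = n-1" using \<open>length us = n - 1\<close> x_def by simp
    have mx: "map ?f x = us" unfolding x_def map_map
    proof (rule map_idI)
      fix b assume "b \<in> set us"
      then have "b \<in> {2..n}" using su2 by blast
      then show "(?f \<circ> ?f) b = b" by auto
    qed
    have "naples_run (n-1) 0 {} x \<noteq> None"
    proof
      assume "naples_run (n-1) 0 {} x = None"
      then have "1 \<in> occ1" using B_none[of n "{}" x occ1] assms sx ru mx by auto
      then show False using o1 by simp
    qed
    then have "x \<in> PF (n-1)" using PFdef sx lx by auto
    moreover have "Psi n x = y" using mx yd \<open>vs = []\<close> by (simp add: Psi_def)
    ultimately show ?thesis by blast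
  qed
  show ?thesis unfolding bij_betw_def using inj fwd bwd by blast
qed

end
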